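(* If $S=\{v_1,\ldots,v_n\}\subset\mathbb Z^n$ is an orthogonal subset with $p_4(S)=n$, then the lattice generated by $S$ is not cubiquitous.
   Context: $\mathbb Z^n$ carries the standard dot product with standard basis $e_1,\ldots,e_n$. $S$ is orthogonal if $\langle v_i,v_i\rangle\ge1$ for all $i$ and $\langle v_i,v_j\rangle=0$ for $i\ne j$. $E_j=\{i:\langle v_i,e_j\rangle\ne0\}$, $p_4(S)=|\{j:|E_j|=4\}|$. A full-rank sublattice $\Lambda\subset\mathbb Z^n$ is cubiquitous if $\Lambda\cap(x+\{0,1\}^n)\ne\emptyset$ for every $x\in\mathbb Z^n$. *)

theory Defs
  imports "HOL-Analysis.Analysis"
begin

text \<open>Vectors of Z^n are modelled as int ^ 'n, with 'n a finite index type, n = CARD('n).\<close>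

definition zdot :: "int ^ 'n \<Rightarrow> int ^ 'n \<Rightarrow> int" where
  "zdot x y = (\<Sum>j\<in>UNIV. x $ j * y $ j)"

definition zbasis :: "'n \<Rightarrow> int ^ 'n" where
  "zbasis j = (\<chi> k. if k = j then 1 else 0)"

definition orthogonal_family :: "('i \<Rightarrow> int ^ 'n) \<Rightarrow> bool" where
  "orthogonal_family v \<longleftrightarrow>
     (\<forall>i. zdot (v i) (v i) \<ge> 1) \<and> (\<forall>i k. i \<noteq> k \<longrightarrow> zdot (v i) (v k) = 0)"

definition Eset :: "('i \<Rightarrow> int ^ 'n) \<Rightarrow> 'n \<Rightarrow> 'i set" where
  "Eset v j = {i. zdot (v i) (zbasis j) \<noteq> 0}"

definition p4 :: "('i::finite \<Rightarrow> int ^ 'n) \<Rightarrow> nat" where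
  "p4 v = card {j. card (Eset v j) = 4}"

definition lattice_gen :: "('i::finite \<Rightarrow> int ^ 'n) \<Rightarrow> (int ^ 'n) set" where
  "lattice_gen v = {(\<Sum>i\<in>UNIV. c i *s v i) | c. True}"

definition to_real_vec :: "int ^ 'n \<Rightarrow> real ^ 'n" where
  "to_real_vec x = (\<chi> j. real_of_int (x $ j))"

definition full_rank_sublattice :: "(int ^ 'n) set \<Rightarrow> bool" where
  "full_rank_sublattice L \<longleftrightarrow>
     0 \<in> L \<and> (\<forall>x\<in>L. \<forall>y\<in>L. x + y \<in> L) \<and> (\<forall>x\<in>L. - x \<in> L) \<and>
     span (to_real_vec ` L) = UNIV"

definition cube01 :: "(int ^ 'n) set" where
  "cube01 = {y. \<forall>j. y $ j \<in> {0, 1}}"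

definition cubiquitous :: "(int ^ 'n) set \<Rightarrow> bool" where
  "cubiquitous L \<longleftrightarrow> full_rank_sublattice L \<and>
     (\<forall>x. L \<inter> ((\<lambda>y. x + y) ` cube01) \<noteq> {})"

end

theory Submission
  imports Defs
begin


lemma zdot_zbasis: "zdot x (zbasis j) = x $ j"
  unfolding zdot_def zbasis_def by (simp add: if_distrib cong: if_cong)

lemma zdot_commute: "zdot x y = zdot y x"
  unfolding zdot_def by (simp add: mult.commute)

lemma inner_to_real: "inner (to_real_vec a) (to_real_vec b) = real_of_int (zdot a b)"
  unfolding inner_vec_def to_real_vec_def zdot_def by simp

lemma bessel_z:
  fixes v :: "'i::finite \<Rightarrow> int ^ 'n" and w :: "int ^ 'n"
  assumes orth: "\<And>i k. i \<noteq> k \<Longrightarrow> zdot (v i) (v k) = 0"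
    and pos: "\<And>i. zdot (v i) (v i) > 0"
  shows "(\<Sum>i\<in>UNIV. (real_of_int (zdot w (v i)))^2 / real_of_int (zdot (v i) (v i)))
          \<le> real_of_int (zdot w w)"
proof -
  define W where "W = to_real_vec w"
  define V where "V i = to_real_vec (v i)" for i
  define a where "a i = inner W (V i)" for i
  define dd where "dd i = inner (V i) (V i)" for i
  have dpos: "dd i > 0" for i using pos[of i] by (simp add: dd_def V_def inner_to_real)
  have VV: "inner (V i) (V k) = (if i = k then dd i else 0)" for i k
    using orth[of i k] by (simp add: dd_def V_def inner_to_real)
  define y where "y = W - (\<Sum>i\<in>UNIV. (a i / dd i) *\<^sub>R V i)"
  have 1: "inner W (\<Sum>i\<in>UNIV. (a i / dd i) *\<^sub>R V i) = (\<Sum>i\<in>UNIV. (a i)^2 / dd i)"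
    by (simp add: inner_sum_right a_def power2_eq_square)
  have 3: "inner (V i) (\<Sum>k\<in>UNIV. (a k / dd k) *\<^sub>R V k) = a i" for i
  proof -
    have "inner (V i) (\<Sum>k\<in>UNIV. (a k / dd k) *\<^sub>R V k)
        = (\<Sum>k\<in>UNIV. if k = i then a i / dd i * dd i else 0)"
      unfolding inner_sum_right by (intro sum.cong refl) (simp add: VV)
    also have "\<dots> = a i" using dpos[of i] by simp
    finally show ?thesis .
  qed
  have 2: "inner (\<Sum>i\<in>UNIV. (a i / dd i) *\<^sub>R V i) (\<Sum>i\<in>UNIV. (a i / dd i) *\<^sub>R V i)
      = (\<Sum>i\<in>UNIV. (a i)^2 / dd i)"
    by (simp add: inner_sum_left 3 power2_eq_square)
  define S where "S = (\<Sum>i\<in>UNIV. (a i / dd i) *\<^sub>R V i)"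
  have 4: "inner S W = inner W S" by (rule inner_commute)
  have "0 \<le> inner y y" by (rule inner_ge_zero)
  also have "inner y y = inner W W - (\<Sum>i\<in>UNIV. (a i)^2 / dd i)"
    unfolding y_def S_def[symmetric] inner_diff_left inner_diff_right 4
    using 1 2 unfolding S_def[symmetric] by simp
  finally have "(\<Sum>i\<in>UNIV. (a i)^2 / dd i) \<le> inner W W" by simp
  then show ?thesis by (simp add: a_def dd_def W_def V_def inner_to_real)
qed

lemma zdot_sum_left:
  "zdot (\<Sum>k\<in>A. c k *s u k) y = (\<Sum>k\<in>A. c k * zdot (u k) y)"
  unfolding zdot_def by (simp add: sum_distrib_left sum_distrib_right mult.assoc sum.swap[of _ A])

lemma lattice_dot:
  fixes v :: "'i::finite \<Rightarrow> int ^ 'n"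
  assumes "z \<in> lattice_gen v" and "orthogonal_family v"
  shows "\<exists>t. \<forall>i. zdot z (v i) = t i * zdot (v i) (v i)"
proof -
  obtain c where z: "z = (\<Sum>k\<in>UNIV. c k *s v k)" using assms(1) unfolding lattice_gen_def by blast
  have "zdot z (v i) = c i * zdot (v i) (v i)" for i
  proof -
    have "zdot z (v i) = (\<Sum>k\<in>UNIV. if k = i then c i * zdot (v i) (v i) else 0)"
      unfolding z zdot_sum_left using assms(2) unfolding orthogonal_family_def
      by (intro sum.cong) auto
    then show ?thesis by simp
  qed
  then show ?thesis by blast
qed


lemma cols4:
  fixes v :: "'i::finite \<Rightarrow> int ^ 'n::finite"
  assumes "p4 v = CARD('n)"
  shows "card {i. v i $ j \<noteq> 0} = 4"
proof -
  have "{j. card (Eset v j) = 4} = UNIV"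
    by (rule card_eq_UNIV_imp_eq_UNIV) (use assms in \<open>auto simp: p4_def\<close>)
  then have "card (Eset v j) = 4" by blast
  then show ?thesis by (simp add: Eset_def zdot_zbasis)
qed

lemma support2:
  fixes v :: "'i::finite \<Rightarrow> int ^ 'n::finite"
  assumes orth: "orthogonal_family v" and col: "\<And>j. card {i. v i $ j \<noteq> 0} = 4"
    and nz: "v i $ j1 \<noteq> 0"
  shows "\<exists>j2. j2 \<noteq> j1 \<and> v i $ j2 \<noteq> 0"
proof (rule ccontr)
  assume "\<not> ?thesis"
  then have z: "\<And>j. j \<noteq> j1 \<Longrightarrow> v i $ j = 0" by blast
  have "v k $ j1 = 0" if "k \<noteq> i" for k
  proof -
    have "zdot (v k) (v i) = (\<Sum>j\<in>UNIV. if j = j1 then v k $ j1 * v i $ j1 else 0)"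
      unfolding zdot_def by (intro sum.cong refl) (auto simp: z)
    then have "v k $ j1 * v i $ j1 = 0" using orth that unfolding orthogonal_family_def by simp
    then show ?thesis using nz by simp
  qed
  then have "{k. v k $ j1 \<noteq> 0} \<subseteq> {i}" by blast
  then have "card {k. v k $ j1 \<noteq> 0} \<le> 1" using card_mono[of "{i}"] by fastforce
  then show False using col[of j1] by simp
qed

lemma caseA:
  fixes v :: "'i::finite \<Rightarrow> int ^ 'n::finite"
  assumes orth: "orthogonal_family v" and col: "\<And>j. card {i. v i $ j \<noteq> 0} = 4"
    and noone: "\<And>j. \<bar>v i $ j\<bar> \<noteq> 1"
  shows "\<not> cubiquitous (lattice_gen v)"
proof
  assume cub: "cubiquitous (lattice_gen v)"
  define M where "M j = v i $ j" for j
  define d where "d = zdot (v i) (v i)"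
  have d_eq: "d = (\<Sum>j\<in>UNIV. (M j)^2)" by (simp add: d_def zdot_def M_def power2_eq_square)
  have dpos: "d \<ge> 1" using orth by (simp add: orthogonal_family_def d_def)
  obtain j1 where j1: "M j1 \<noteq> 0"
  proof (rule ccontr)
    assume "\<not> thesis"
    then have "\<forall>j. M j = 0" using that by blast
    then show False using dpos d_eq by simp
  qed
  obtain j2 where j2: "j2 \<noteq> j1" "M j2 \<noteq> 0" using support2[OF orth col, of i j1] j1 M_def by auto
  have big: "\<bar>M j\<bar> \<ge> 2" if "M j \<noteq> 0" for j using noone[of j] that M_def by fastforce
  define m where "m = \<bar>M j1\<bar>"
  define l1 where "l1 = (\<Sum>j\<in>UNIV. \<bar>M j\<bar>)"
  have "d \<ge> (\<Sum>j\<in>UNIV. 2 * \<bar>M j\<bar>)"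
    unfolding d_eq
  proof (rule sum_mono)
    fix j
    show "2 * \<bar>M j\<bar> \<le> (M j)^2"
    proof (cases "M j = 0")
      case False
      then have "\<bar>M j\<bar> \<ge> 2" by (rule big)
      then have "2 * \<bar>M j\<bar> \<le> \<bar>M j\<bar> * \<bar>M j\<bar>" by (intro mult_right_mono) auto
      then show ?thesis by (simp add: power2_eq_square)
    qed simp
  qed
  then have dl: "d \<ge> 2 * l1" by (simp add: l1_def sum_distrib_left)
  have "l1 \<ge> (\<Sum>j\<in>{j1, j2}. \<bar>M j\<bar>)"
    unfolding l1_def by (rule sum_mono2) auto
  then have lm: "l1 \<ge> m + 2" using j2 big[OF j2(2)] by (simp add: m_def)
  define x :: "int ^ 'n" where "x = (\<chi> j. (if M j < 0 then -1 else 0) + (if j = j1 then sgn (M j1) else 0))"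
  obtain c where c: "c \<in> cube01" and zin: "x + c \<in> lattice_gen v"
    using cub unfolding cubiquitous_def by blast
  obtain t where t: "\<And>k. zdot (x + c) (v k) = t k * zdot (v k) (v k)"
    using lattice_dot[OF zin orth] by blast
  define T where "T j = ((if M j < 0 then -1 else 0) + c $ j) * M j" for j
  have T_bounds: "0 \<le> T j \<and> T j \<le> \<bar>M j\<bar>" for j
  proof -
    have "c $ j = 0 \<or> c $ j = 1" using c unfolding cube01_def by blast
    then show ?thesis unfolding T_def by (cases "M j < 0") auto
  qed
  have "zdot (x + c) (v i) = (\<Sum>j\<in>UNIV. T j + (if j = j1 then sgn (M j1) * M j1 else 0))"
    unfolding zdot_def by (intro sum.cong refl) (simp add: x_def T_def M_def algebra_simps)
  also have "\<dots> = (\<Sum>j\<in>UNIV. T j) + m"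
  proof -
    have "sgn (M j1) * M j1 = m" unfolding m_def by (cases rule: linorder_cases[of "M j1" 0]) auto
    then show ?thesis by (simp add: sum.distrib)
  qed
  finally have zeq: "t i * d = (\<Sum>j\<in>UNIV. T j) + m" using t[of i] d_def by simp
  have "(\<Sum>j\<in>UNIV. T j) \<ge> 0" using T_bounds by (simp add: sum_nonneg)
  moreover have "(\<Sum>j\<in>UNIV. T j) \<le> l1" unfolding l1_def using T_bounds by (intro sum_mono) auto
  moreover have "m > 0" using j1 by (simp add: m_def)
  ultimately have "0 < t i * d" "t i * d < d" using zeq dl lm by linarith+
  then have lt: "t i * d < d" and gt: "0 < t i * d" by auto
  have "t i > 0" using gt dpos by (simp add: zero_less_mult_iff)
  then have "1 * d \<le> t i * d" using dpos by (intro mult_right_mono) auto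
  then show False using lt by simp
qed


lemma rep_bound:
  fixes t u m d :: int
  assumes "d > 0"
  shows "(2*((u+m) mod d) - d)^2 \<le> (2*t*d - (2*u + d + 2*m))^2"
proof -
  define q where "q = (u+m) div d"
  define r where "r = (u+m) mod d"
  have um: "u + m = q*d + r" by (simp add: q_def r_def)
  have r0: "0 \<le> r" "r < d" using assms by (simp_all add: r_def)
  define w where "w = t - q - 1"
  have e: "2*t*d - (2*u + d + 2*m) = 2*d*w - (2*r - d)"
    using um by (simp add: w_def algebra_simps)
  have "\<bar>2*r - d\<bar> \<le> \<bar>2*d*w - (2*r - d)\<bar>"
  proof (cases "w = 0")
    case False
    then have "\<bar>w\<bar> \<ge> 1" by simp
    then have "\<bar>2*d*w\<bar> \<ge> 2*d" using assms by (simp add: abs_mult)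
    then show ?thesis using r0 by linarith
  qed simp
  then have "\<bar>2*r - d\<bar>^2 \<le> \<bar>2*d*w - (2*r - d)\<bar>^2" by (intro power_mono) auto
  then show ?thesis by (simp add: e r_def)
qed

lemma sum_mod_shift:
  fixes G :: "int \<Rightarrow> real" and u :: int
  assumes "n > 0"
  shows "(\<Sum>k<n. G ((u + int k) mod int n)) = (\<Sum>k<n. G (int k))"
proof (rule sum.reindex_bij_witness[of _ "\<lambda>k. nat ((int k - u) mod int n)" "\<lambda>k. nat ((u + int k) mod int n)"])
  fix a assume a: "a \<in> {..<n}"
  show "nat ((int (nat ((u + int a) mod int n)) - u) mod int n) = a"
    using assms a by (simp add: mod_diff_left_eq) 
  show "nat ((u + int a) mod int n) \<in> {..<n}" using assms by (simp add: nat_less_iff)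
  show "G (int (nat ((u + int a) mod int n))) = G ((u + int a) mod int n)" using assms by simp
next
  fix b assume b: "b \<in> {..<n}"
  show "nat ((u + int (nat ((int b - u) mod int n))) mod int n) = b"
  proof -
    have "(u + (int b - u) mod int n) mod int n = (u + (int b - u)) mod int n"
      by (rule mod_add_right_eq)
    then show ?thesis using assms b by simp
  qed
  show "nat ((int b - u) mod int n) \<in> {..<n}" using assms by (simp add: nat_less_iff)
qed

lemma sum_sq_gen:
  "3 * (\<Sum>k<n. (2 * real k - c)^2) = 2*(real n - 1)*real n*(2*real n - 1) - 6*c*real n*(real n - 1) + 3*real n*c^2"
  by (induction n) (simp_all add: algebra_simps power2_eq_square)

lemma sum_sq:
  "3 * (\<Sum>k<n. (2 * real k - real n)^2) = real n ^ 3 + 2 * real n"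
  by (subst sum_sq_gen) (simp add: algebra_simps power2_eq_square power3_eq_cube)


definition zbox :: "int \<Rightarrow> (int ^ 'n::finite) set" where
  "zbox N = {x. \<forall>j. 0 \<le> x $ j \<and> x $ j < N}"

lemma finite_zbox: "finite (zbox N :: (int ^ 'n::finite) set)"
proof -
  have "zbox N \<subseteq> (\<lambda>f. \<chi> j. f j) ` (PiE (UNIV :: 'n set) (\<lambda>_. {0..<N}))"
  proof
    fix x :: "int ^ 'n" assume "x \<in> zbox N"
    then have "(\<lambda>j. x $ j) \<in> PiE UNIV (\<lambda>_. {0..<N})" by (auto simp: zbox_def PiE_def extensional_def)
    moreover have "x = (\<chi> j. (\<lambda>j. x $ j) j)" by simp
    ultimately show "x \<in> (\<lambda>f. \<chi> j. f j) ` (PiE UNIV (\<lambda>_. {0..<N}))" by blast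
  qed
  moreover have "finite ((\<lambda>f. \<chi> j. f j) ` (PiE (UNIV :: 'n set) (\<lambda>_. {0..<N})) :: (int ^ 'n) set)"
    by (intro finite_imageI finite_PiE) auto
  ultimately show ?thesis by (rule finite_subset)
qed

lemma zero_zbox: "N > 0 \<Longrightarrow> 0 \<in> zbox N"
  by (simp add: zbox_def)

lemma avg_row:
  fixes v :: "int ^ 'n::finite" and G :: "int \<Rightarrow> real"
  assumes e: "v $ j0 = 1 \<or> v $ j0 = -1" and n: "n > 0" and dv: "int n dvd N" and Npos: "N > 0"
  shows "real n * (\<Sum>x\<in>zbox N. G ((zdot x v + m) mod int n)) = real (card (zbox N :: (int ^ 'n) set)) * (\<Sum>k<n. G (int k))"
proof -
  define \<epsilon> where "\<epsilon> = v $ j0"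
  have ee: "\<epsilon> * \<epsilon> = 1" using e by (auto simp: \<epsilon>_def)
  define T where "T x = (\<chi> j. if j = j0 then (x $ j0 + \<epsilon>) mod N else x $ j)" for x :: "int ^ 'n"
  have Tzbox: "T x \<in> zbox N" if "x \<in> zbox N" for x
    using that Npos unfolding zbox_def T_def by simp
  have Tinj: "inj_on T (zbox N)"
  proof
    fix x y assume x: "x \<in> zbox N" and y: "y \<in> zbox N" and eq: "T x = T y"
    show "x = y"
    proof (subst vec_eq_iff, intro allI)
      fix j
      show "x $ j = y $ j"
      proof (cases "j = j0")
        case True
        have "T x $ j0 = T y $ j0" using eq by simp
        then have "(x $ j0 + \<epsilon>) mod N = (y $ j0 + \<epsilon>) mod N" by (simp add: T_def)
        then have "((x $ j0 + \<epsilon>) mod N - \<epsilon>) mod N = ((y $ j0 + \<epsilon>) mod N - \<epsilon>) mod N" by simp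
        then have "x $ j0 mod N = y $ j0 mod N" by (simp add: mod_diff_left_eq)
        then show ?thesis using x y True by (simp add: zbox_def)
      next
        case False
        have "T x $ j = T y $ j" using eq by simp
        then show ?thesis using False by (simp add: T_def)
      qed
    qed
  qed
  have Timg: "T ` zbox N = zbox N"
    by (rule endo_inj_surj[OF finite_zbox _ Tinj]) (use Tzbox in blast)
  have Tdot: "zdot (T x) v = zdot x v + ((x $ j0 + \<epsilon>) mod N - x $ j0) * \<epsilon>" for x
  proof -
    have "zdot (T x) v = (\<Sum>j\<in>UNIV. x $ j * v $ j + (if j = j0 then ((x $ j0 + \<epsilon>) mod N - x $ j0) * \<epsilon> else 0))"
      unfolding zdot_def
    proof (rule sum.cong[OF refl])
      fix j
      show "T x $ j * v $ j = x $ j * v $ j + (if j = j0 then ((x $ j0 + \<epsilon>) mod N - x $ j0) * \<epsilon> else 0)"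
        by (cases "j = j0") (simp_all add: T_def \<epsilon>_def algebra_simps)
    qed
    then show ?thesis by (simp add: sum.distrib zdot_def)
  qed
  obtain r where r: "N = int n * r" using dv by (auto elim: dvdE)
  have Tmod: "(zdot (T x) v + k) mod int n = (zdot x v + 1 + k) mod int n" for x k
  proof -
    define q where "q = (x $ j0 + \<epsilon>) div N"
    have h: "(x $ j0 + \<epsilon>) mod N = x $ j0 + \<epsilon> - N * q"
      by (simp add: q_def minus_div_mult_eq_mod[symmetric] mult.commute)
    have "zdot (T x) v + k = zdot x v + \<epsilon> * \<epsilon> + k - N * q * \<epsilon>"
      unfolding Tdot h by (simp add: algebra_simps)
    also have "\<dots> = (zdot x v + 1 + k) + int n * (- (r * q * \<epsilon>))"
      by (simp add: ee r algebra_simps)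
    finally have "zdot (T x) v + k = (zdot x v + 1 + k) + int n * (- (r * q * \<epsilon>))" .
    then show ?thesis by (simp only: mod_mult_self2)
  qed
  define S where "S k = (\<Sum>x\<in>zbox N. G ((zdot x v + m + int k) mod int n))" for k :: nat
  have Sstep: "S (Suc k) = S k" for k
  proof -
    have "S k = (\<Sum>x\<in>T ` zbox N. G ((zdot x v + m + int k) mod int n))" by (simp add: S_def Timg)
    also have "\<dots> = (\<Sum>x\<in>zbox N. G ((zdot (T x) v + (m + int k)) mod int n))"
      by (simp add: sum.reindex[OF Tinj] add.assoc)
    also have "\<dots> = S (Suc k)" unfolding S_def Tmod by (simp add: algebra_simps)
    finally show ?thesis by simp
  qed
  have Sk: "S k = S 0" for k
  proof (induction k)
    case (Suc k)
    then show ?case by (simp only: Sstep)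
  qed simp
  have "(\<Sum>k<n. S k) = (\<Sum>k<n. S 0)" by (intro sum.cong refl Sk)
  then have "real n * S 0 = (\<Sum>k<n. S k)" by simp
  also have "\<dots> = (\<Sum>x\<in>zbox N. \<Sum>k<n. G ((zdot x v + m + int k) mod int n))"
    unfolding S_def by (rule sum.swap)
  also have "\<dots> = (\<Sum>x\<in>(zbox N :: (int ^ 'n) set). \<Sum>k<n. G (int k))"
  proof (rule sum.cong[OF refl])
    fix x :: "int ^ 'n"
    show "(\<Sum>k<n. G ((zdot x v + m + int k) mod int n)) = (\<Sum>k<n. G (int k))"
      using sum_mod_shift[OF n, of G "zdot x v + m"] by simp
  qed
  also have "\<dots> = real (card (zbox N :: (int ^ 'n) set)) * (\<Sum>k<n. G (int k))" by simp
  finally show ?thesis by (simp add: S_def)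
qed



lemma colsum:
  fixes v :: "'i::finite \<Rightarrow> int ^ 'n::finite"
  assumes col: "\<And>j. card {i. v i $ j \<noteq> 0} = 4"
  shows "(\<Sum>i\<in>UNIV. zdot (v i) (v i)) \<ge> 4 * int CARD('n)"
proof -
  have "(\<Sum>i\<in>UNIV. zdot (v i) (v i)) = (\<Sum>j\<in>UNIV. \<Sum>i\<in>UNIV. (v i $ j)^2)"
    unfolding zdot_def by (simp add: power2_eq_square sum.swap[of _ "UNIV :: 'i set"])
  also have "\<dots> \<ge> (\<Sum>j\<in>(UNIV :: 'n set). \<Sum>i\<in>UNIV. if v i $ j \<noteq> 0 then 1 else 0)"
  proof (intro sum_mono)
    fix j i
    show "(if v i $ j \<noteq> 0 then 1 else 0) \<le> (v i $ j)^2"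
    proof (cases "v i $ j = 0")
      case False
      then have "(v i $ j)^2 > 0" by simp
      then have "(v i $ j)^2 \<ge> 1" by linarith
      then show ?thesis using False by simp
    qed simp
  qed
  also have "(\<Sum>j\<in>(UNIV :: 'n set). \<Sum>i\<in>UNIV. if v i $ j \<noteq> 0 then 1 else 0) = (\<Sum>j\<in>(UNIV :: 'n set). (4::int))"
  proof (rule sum.cong[OF refl])
    fix j
    have "(\<Sum>i\<in>UNIV. if v i $ j \<noteq> 0 then 1 else 0) = (\<Sum>i\<in>{i. v i $ j \<noteq> 0}. (1::int))"
      by (simp add: sum.inter_filter[symmetric])
    also have "\<dots> = int (card {i. v i $ j \<noteq> 0})" by simp
    finally show "(\<Sum>i\<in>UNIV. if v i $ j \<noteq> 0 then 1 else 0) = (4::int)" using col[of j] by simp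
  qed
  finally show ?thesis by simp
qed


lemma caseB:
  fixes v :: "'i::finite \<Rightarrow> int ^ 'n::finite"
  assumes orth: "orthogonal_family v" and col: "\<And>j. card {i. v i $ j \<noteq> 0} = 4"
    and one: "\<And>i. \<exists>j. v i $ j = 1 \<or> v i $ j = -1"
  shows "\<not> cubiquitous (lattice_gen v)"
proof
  assume cub: "cubiquitous (lattice_gen v)"
  define d where "d i = zdot (v i) (v i)" for i
  have dpos: "d i > 0" for i using orth by (simp add: orthogonal_family_def d_def) (meson zero_less_one order_less_le_trans)
  define onev :: "int ^ 'n" where "onev = (\<chi> j. 1)"
  define \<sigma> where "\<sigma> i = zdot onev (v i)" for i
  have ev: "even (\<sigma> i - d i)" for i
  proof -
    have "\<sigma> i - d i = (\<Sum>j\<in>UNIV. v i $ j - v i $ j * v i $ j)"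
      by (simp add: \<sigma>_def d_def zdot_def onev_def sum_subtractf)
    also have "even \<dots>"
    proof (rule dvd_sum)
      fix j
      have "v i $ j - v i $ j * v i $ j = - (v i $ j * (v i $ j - 1))" by (simp add: algebra_simps)
      moreover have "even (v i $ j * (v i $ j - 1))" by simp
      ultimately show "even (v i $ j - v i $ j * v i $ j)" by simp
    qed
    finally show ?thesis .
  qed
  define m where "m i = (\<sigma> i - d i) div 2" for i
  have \<sigma>eq: "\<sigma> i = d i + 2 * m i" for i using ev[of i] by (simp add: m_def)
  define N where "N = (\<Prod>i\<in>UNIV. d i)"
  have Npos: "N > 0" unfolding N_def using dpos by (simp add: prod_pos)
  have ddvd: "d i dvd N" for i unfolding N_def by (rule dvd_prodI) auto
  define G where "G i k = (2 * real_of_int k - real_of_int (d i))^2" for i k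
  define n where "n = CARD('n)"
  have pw: "(\<Sum>i\<in>UNIV. G i ((zdot x (v i) + m i) mod d i) / real_of_int (d i)) \<le> real n" for x
  proof -
    obtain c where c: "c \<in> cube01" and zin: "x + c \<in> lattice_gen v"
      using cub unfolding cubiquitous_def by blast
    obtain t where t: "\<And>k. zdot (x + c) (v k) = t k * zdot (v k) (v k)"
      using lattice_dot[OF zin orth] by blast
    define w where "w = (\<chi> j. 2 * c $ j - 1)"
    have ww: "zdot w w = int n"
    proof -
      have "zdot w w = (\<Sum>j\<in>(UNIV :: 'n set). 1)"
        unfolding zdot_def
      proof (rule sum.cong[OF refl])
        fix j
        have "c $ j = 0 \<or> c $ j = 1" using c unfolding cube01_def by blast
        then show "w $ j * w $ j = 1" unfolding w_def by auto
      qed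
      then show ?thesis by (simp add: n_def)
    qed
    have wv: "zdot w (v i) = 2 * t i * d i - (2 * zdot x (v i) + d i + 2 * m i)" for i
    proof -
      have "zdot w (v i) = 2 * zdot (x + c) (v i) - 2 * zdot x (v i) - \<sigma> i"
        unfolding zdot_def \<sigma>_def onev_def sum_distrib_left sum_subtractf[symmetric]
        by (rule sum.cong[OF refl]) (simp add: w_def algebra_simps)
      then show ?thesis using t[of i] \<sigma>eq[of i] by (simp add: d_def)
    qed
    have B: "(\<Sum>i\<in>UNIV. (real_of_int (zdot w (v i)))^2 / real_of_int (d i)) \<le> real_of_int (zdot w w)"
      unfolding d_def
      by (rule bessel_z) (use orth dpos in \<open>auto simp: orthogonal_family_def d_def\<close>)
    have "(\<Sum>i\<in>UNIV. G i ((zdot x (v i) + m i) mod d i) / real_of_int (d i))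
        \<le> (\<Sum>i\<in>UNIV. (real_of_int (zdot w (v i)))^2 / real_of_int (d i))"
    proof (rule sum_mono)
      fix i
      have "(2*((zdot x (v i) + m i) mod d i) - d i)^2 \<le> (2*t i*d i - (2*zdot x (v i) + d i + 2*m i))^2"
        by (rule rep_bound) (rule dpos)
      then have "real_of_int ((2*((zdot x (v i) + m i) mod d i) - d i)^2) \<le> real_of_int ((zdot w (v i))^2)"
        unfolding wv by linarith
      then have "G i ((zdot x (v i) + m i) mod d i) \<le> (real_of_int (zdot w (v i)))^2"
        by (simp add: G_def)
      then show "G i ((zdot x (v i) + m i) mod d i) / real_of_int (d i) \<le> (real_of_int (zdot w (v i)))^2 / real_of_int (d i)"
        using dpos[of i] by (intro divide_right_mono) auto
    qed
    also have "\<dots> \<le> real n" using B ww by simp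
    finally show ?thesis .
  qed
  define C where "C = real (card (zbox N :: (int ^ 'n) set))"
  have Cpos: "C > 0" unfolding C_def using finite_zbox zero_zbox[OF Npos] by (simp add: card_gt_0_iff) blast
  have row: "(\<Sum>x\<in>(zbox N :: (int ^ 'n) set). G i ((zdot x (v i) + m i) mod d i)) / real_of_int (d i) \<ge> C * real_of_int (d i) / 3" for i
  proof -
    obtain j0 where j0: "v i $ j0 = 1 \<or> v i $ j0 = -1" using one by blast
    define nn where "nn = nat (d i)"
    have nnd: "int nn = d i" using dpos[of i] by (simp add: nn_def)
    have nnpos: "nn > 0" using dpos[of i] by (simp add: nn_def)
    define S where "S = (\<Sum>x\<in>(zbox N :: (int ^ 'n) set). G i ((zdot x (v i) + m i) mod d i))"
    have "real nn * S = C * (\<Sum>k<nn. G i (int k))"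
      unfolding S_def C_def using avg_row[OF j0 nnpos _ Npos, where m="m i" and G="G i"] ddvd[of i] nnd by simp
    also have "(\<Sum>k<nn. G i (int k)) = (\<Sum>k<nn. (2 * real k - real nn)^2)"
      unfolding G_def using nnd by (metis of_int_of_nat_eq)
    finally have "3 * (real nn * S) = C * (real nn ^ 3 + 2 * real nn)" using sum_sq[of nn] by simp
    then have "3 * (real nn * S) \<ge> C * real nn ^ 3" using Cpos nnpos by (simp add: algebra_simps)
    moreover have "C * real nn ^ 3 = real nn * (C * real nn ^ 2)" by (simp add: power2_eq_square power3_eq_cube)
    moreover have "3 * (real nn * S) = real nn * (3 * S)" by simp
    ultimately have "real nn * (C * real nn ^ 2) \<le> real nn * (3 * S)" by simp
    then have h3: "C * real nn ^ 2 \<le> 3 * S" using nnpos by (simp add: mult_le_cancel_left_pos)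
    have "C * real nn / 3 * real nn \<le> S" using h3 by (simp add: power2_eq_square)
    then have "S / real nn \<ge> C * real nn / 3" using nnpos by (simp add: pos_le_divide_eq)
    then show ?thesis unfolding S_def using nnd by (metis of_int_of_nat_eq)
  qed
  have "(\<Sum>x\<in>(zbox N :: (int ^ 'n) set). \<Sum>i\<in>UNIV. G i ((zdot x (v i) + m i) mod d i) / real_of_int (d i))
      \<le> (\<Sum>x\<in>(zbox N :: (int ^ 'n) set). real n)"
    by (rule sum_mono) (rule pw)
  also have "\<dots> = C * real n" by (simp add: C_def)
  finally have up: "(\<Sum>i\<in>UNIV. (\<Sum>x\<in>(zbox N :: (int ^ 'n) set). G i ((zdot x (v i) + m i) mod d i)) / real_of_int (d i)) \<le> C * real n"
    by (simp add: sum.swap[of _ "zbox N"] sum_divide_distrib)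
  define A where "A = real_of_int (\<Sum>i\<in>UNIV. d i)"
  have "(\<Sum>i\<in>UNIV. C * real_of_int (d i) / 3) \<le> C * real n"
    using order_trans[OF sum_mono[OF row] up] by simp
  moreover have "(\<Sum>i\<in>UNIV. C * real_of_int (d i) / 3) = C / 3 * A"
    by (simp add: sum_distrib_left A_def sum_divide_distrib)
  ultimately have h1: "C / 3 * A \<le> C * real n" by simp
  have "A \<ge> 4 * real n"
    using colsum[OF col] unfolding d_def n_def A_def by linarith
  then have "C / 3 * (4 * real n) \<le> C / 3 * A" using Cpos by (intro mult_left_mono) auto
  moreover have "C / 3 * (4 * real n) = 4 / 3 * (C * real n)" by simp
  moreover have "C * real n > 0" using Cpos by (simp add: n_def)
  ultimately show False using h1 by linarith
qed


theorem theorem3p4: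
  fixes v :: "'n::finite \<Rightarrow> int ^ 'n"
  assumes "orthogonal_family v"
    and "p4 v = CARD('n)"
  shows "\<not> cubiquitous (lattice_gen v)"
proof -
  have col: "\<And>j. card {i. v i $ j \<noteq> 0} = 4" using cols4[OF assms(2)] by blast
  show ?thesis
  proof (cases "\<exists>i. \<forall>j. \<bar>v i $ j\<bar> \<noteq> 1")
    case True
    then obtain i where "\<And>j. \<bar>v i $ j\<bar> \<noteq> 1" by blast
    then show ?thesis by (rule caseA[OF assms(1) col])
  next
    case False
    have "\<exists>j. v i $ j = 1 \<or> v i $ j = -1" for i
    proof -
      obtain j where "\<bar>v i $ j\<bar> = 1" using False by blast
      then have "v i $ j = 1 \<or> v i $ j = -1" by (cases "v i $ j \<ge> 0") auto
      then show ?thesis by blast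
    qed
    then show ?thesis by (rule caseB[OF assms(1) col])
  qed
qed

end
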